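(* Let $\mathbf{a}=\langle a_1,\dots,a_s\rangle$, $\mathbf{b}=\langle b_1,\dots,b_t\rangle$ be integer vectors with $a_1+\cdots+a_s=b_1+\cdots+b_t$, let $n,m$ be positive integers, $r+1=\max(s,n+t)$, and $\delta=a_1\varepsilon_1+\cdots+a_s\varepsilon_s-(b_1\varepsilon_{n+1}+\cdots+b_t\varepsilon_{n+t})\in\mathbb{Z}^{r+1}$. Let $\mathcal{T}$ be a set of throws $T_{i,j}$ with $1\le i\le n$ and $i+j\le r+1$, and let $\Lambda=\{\varepsilon_i-\varepsilon_{i+j}:T_{i,j}\in\mathcal{T}\}$. Define \[Q_\Lambda(\delta)=\Big\{p\in P_\Lambda(\delta):\ a_j+\#\{\text{elements of }p\text{ of the form }\varepsilon_i-\varepsilon_j\}\le m\ \text{for all } j\ge1\Big\}\] (with $a_j=0$ for $j>s$, counting with multiplicity). Then $\mathrm{JS}_{\mathcal{T}}(\mathbf{a},\mathbf{b},n,m)$ is in bijection with $Q_\Lambda(\delta)$, so $\mathsf{js}_{\mathcal{T}}(\mathbf{a},\mathbf{b},n,m)=|Q_\Lambda(\delta)|$, and without hand capacity constraint $\mathsf{js}_{\mathcal{T}}(\mathbf{a},\mathbf{b},n)=K_\Lambda(\delta)$.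
   Context: A juggling state is a finitely supported integer vector $\mathbf{s}=\langle s_1,s_2,\dots\rangle$ indexed by heights (trailing zeros omitted; negative entries are magic balls). A juggling sequence of length $n$ from $\mathbf{a}$ to $\mathbf{b}$ is a sequence $(\mathbf{s}_0,\dots,\mathbf{s}_n)$ with $\mathbf{s}_0=\mathbf{a}$, $\mathbf{s}_n=\mathbf{b}$, such that for each $1\le i\le n$ there are nonnegative integers $c^{(i)}_k$ (finitely many nonzero) with $\sum_k c^{(i)}_k=(\mathbf{s}_{i-1})_1$ and $(\mathbf{s}_i)_k=(\mathbf{s}_{i-1})_{k+1}+c^{(i)}_k$ for all $k\ge1$; $c^{(i)}_j$ is the number of throws at time $i$ to height $j$, and $T_{i,j}$ denotes a throw at time $i$ to height $j$. Hand capacity $m$ means all entries of all $\mathbf{s}_i$ are $\le m$. $\mathrm{JS}_{\mathcal{T}}(\mathbf{a},\mathbf{b},n,m)$ is the set of juggling sequences with hand capacity $m$ in which $c^{(i)}_j>0$ only if $T_{i,j}\in\mathcal{T}$; $\mathsf{js}_{\mathcal{T}}$ denotes its cardinality (dropping $m$ means no capacity constraint). $\Phi^+_{A_r}=\{\varepsilon_i-\varepsilon_j:1\le i<j\le r+1\}\subset\mathbb{R}^{r+1}$; $P_\Lambda(\mu)$ is the set of finite multisets of elements of $\Lambda$ summing to $\mu$, $K_\Lambda(\mu)=|P_\Lambda(\mu)|$. *)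

theory Defs
  imports Main "HOL-Library.Multiset" "HOL-Library.Function_Algebras"
begin

(* Juggling states: functions from heights to int; height 0 is unused (value 0),
   and the support is finite. *)
definition jstate :: "(nat \<Rightarrow> int) \<Rightarrow> bool" where
  "jstate s \<longleftrightarrow> s 0 = 0 \<and> finite {k. s k \<noteq> 0}"

(* the vector <x_1,...,x_l> as a finitely supported function on heights 1.. *)
definition jvec :: "int list \<Rightarrow> nat \<Rightarrow> int" where
  "jvec xs k = (if 1 \<le> k \<and> k \<le> length xs then xs ! (k - 1) else 0)"

(* a valid transition at time i from state s to state s', with throw counts c k
   (c k = number of throws at time i to height k), only using throws in T *)
definition jstep :: "(nat \<times> nat) set \<Rightarrow> nat \<Rightarrow> (nat \<Rightarrow> int) \<Rightarrow> (nat \<Rightarrow> int) \<Rightarrow> bool" where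
  "jstep T i s s' \<longleftrightarrow>
     (\<exists>c :: nat \<Rightarrow> nat. c 0 = 0 \<and> finite {k. c k \<noteq> 0}
        \<and> int (sum c {k. c k \<noteq> 0}) = s 1
        \<and> (\<forall>k\<ge>1. s' k = s (k + 1) + int (c k))
        \<and> (\<forall>k. c k > 0 \<longrightarrow> (i, k) \<in> T))"

definition JS :: "(nat \<times> nat) set \<Rightarrow> (nat \<Rightarrow> int) \<Rightarrow> (nat \<Rightarrow> int) \<Rightarrow> nat
                   \<Rightarrow> (nat \<Rightarrow> int) list set" where
  "JS T a b n = {ss. length ss = n + 1 \<and> (\<forall>s\<in>set ss. jstate s)
                  \<and> ss ! 0 = a \<and> ss ! n = b
                  \<and> (\<forall>i\<in>{1..n}. jstep T i (ss ! (i - 1)) (ss ! i))}"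

definition JSm :: "(nat \<times> nat) set \<Rightarrow> (nat \<Rightarrow> int) \<Rightarrow> (nat \<Rightarrow> int) \<Rightarrow> nat \<Rightarrow> nat
                   \<Rightarrow> (nat \<Rightarrow> int) list set" where
  "JSm T a b n m = {ss \<in> JS T a b n. \<forall>s\<in>set ss. \<forall>k. s k \<le> int m}"

(* unit vectors epsilon_i of Z^{r+1}, vectors represented as nat => int on 1..r+1 *)
definition eps :: "nat \<Rightarrow> nat \<Rightarrow> int" where
  "eps i = (\<lambda>k. if k = i then 1 else 0)"

definition throwRoots :: "(nat \<times> nat) set \<Rightarrow> (nat \<Rightarrow> int) set" where
  "throwRoots T = {eps i - eps (i + j) | i j. (i, j) \<in> T}"

definition Ppart :: "(nat \<Rightarrow> int) set \<Rightarrow> (nat \<Rightarrow> int) \<Rightarrow> (nat \<Rightarrow> int) multiset set" where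
  "Ppart L mu = {p. set_mset p \<subseteq> L \<and> sum_mset p = mu}"

definition Kpf :: "(nat \<Rightarrow> int) set \<Rightarrow> (nat \<Rightarrow> int) \<Rightarrow> nat" where
  "Kpf L mu = card (Ppart L mu)"

definition Qpart :: "(nat \<Rightarrow> int) set \<Rightarrow> (nat \<Rightarrow> int) \<Rightarrow> int list \<Rightarrow> nat
                      \<Rightarrow> (nat \<Rightarrow> int) multiset set" where
  "Qpart L mu as m = {p \<in> Ppart L mu. \<forall>j\<ge>1.
      jvec as j + int (size (filter_mset (\<lambda>v. \<exists>i. v = eps i - eps j) p)) \<le> int m}"

definition jdelta :: "int list \<Rightarrow> int list \<Rightarrow> nat \<Rightarrow> nat \<Rightarrow> int" where
  "jdelta as bs n = (\<lambda>k. jvec as k - (if n < k then jvec bs (k - n) else 0))"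

end

theory Submission
  imports Defs
begin


lemma sum_mset_sum: "finite A \<Longrightarrow> sum_mset (sum f A) = (\<Sum>a\<in>A. sum_mset (f a))"
  by (induction A rule: finite_induct) auto

lemma fun_sum_eval: "finite A \<Longrightarrow> (sum (f :: 'a \<Rightarrow> nat \<Rightarrow> int) A) x = (\<Sum>a\<in>A. f a x)"
  by (induction A rule: finite_induct) auto

lemma rep_eval: "(sum_mset (replicate_mset n (a :: nat \<Rightarrow> int))) x = int n * a x"
  by (induction n) (auto simp: algebra_simps)

lemma size_filter_sum: "finite A \<Longrightarrow> size (filter_mset P (sum f A)) = (\<Sum>a\<in>A. size (filter_mset P (f a)))"
  by (induction A rule: finite_induct) auto

lemma size_filter_rep: "size (filter_mset P (replicate_mset n x)) = (if P x then n else 0)"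
  by (induction n) auto

definition rt :: "nat \<Rightarrow> nat \<Rightarrow> nat \<Rightarrow> int" where
  "rt i k = eps i - eps (i + k)"

lemma rt_val: "rt i k x = (if x = i then 1 else 0) - (if x = i + k then 1 else 0)"
  by (simp add: rt_def eps_def)

lemma rt_inj: "k \<ge> 1 \<Longrightarrow> k' \<ge> 1 \<Longrightarrow> rt i k = rt i' k' \<longleftrightarrow> i = i' \<and> k = k'"
proof
  assume k: "k \<ge> 1" "k' \<ge> 1" and e: "rt i k = rt i' k'"
  have "rt i k i = rt i' k' i" using e by simp
  hence ii: "i = i'" using k by (auto simp: rt_val split: if_splits)
  have "rt i k (i+k) = rt i' k' (i+k)" using e by simp
  thus "i = i' \<and> k = k'" using k ii by (auto simp: rt_val split: if_splits)
qed auto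

lemma rt_land: "k \<ge> 1 \<Longrightarrow> (\<exists>i'. rt i k = eps i' - eps j) \<longleftrightarrow> j = i + k"
proof
  assume k: "k \<ge> 1" and "\<exists>i'. rt i k = eps i' - eps j"
  then obtain i' where e: "rt i k = eps i' - eps j" by blast
  have "rt i k (i+k) = (eps i' - eps j) (i+k)" using e by simp
  thus "j = i + k" using k by (auto simp: rt_val eps_def split: if_splits)
qed (auto simp: rt_def)

lemma jvec0[simp]: "jvec xs 0 = 0" by (simp add: jvec_def)



locale jug =
  fixes as bs :: "int list" and n :: nat and T :: "(nat \<times> nat) set"
  assumes Tsub: "T \<subseteq> {(i, j). 1 \<le> i \<and> i \<le> n \<and> 1 \<le> j \<and> i + j \<le> max (length as) (n + length bs)}"
begin

abbreviation "R \<equiv> max (length as) (n + length bs)"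

definition supp :: "(nat \<Rightarrow> nat \<Rightarrow> nat) \<Rightarrow> bool" where
  "supp c \<longleftrightarrow> (\<forall>i k. c i k \<noteq> 0 \<longrightarrow> (i, k) \<in> T)"

definition Gs :: "(nat \<Rightarrow> nat \<Rightarrow> nat) \<Rightarrow> nat \<Rightarrow> nat \<Rightarrow> int" where
  "Gs c t k = (if k = 0 then 0 else jvec as (t + k) + int (\<Sum>i\<in>{1..t}. c i (t + k - i)))"

definition Gl :: "(nat \<Rightarrow> nat \<Rightarrow> nat) \<Rightarrow> (nat \<Rightarrow> int) list" where
  "Gl c = map (Gs c) [0..<n+1]"

definition inn :: "(nat \<Rightarrow> nat \<Rightarrow> nat) \<Rightarrow> nat \<Rightarrow> nat" where
  "inn c j = (\<Sum>i\<in>{1..<j}. c i (j - i))"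

definition outt :: "(nat \<Rightarrow> nat \<Rightarrow> nat) \<Rightarrow> nat \<Rightarrow> nat" where
  "outt c i = (\<Sum>k\<in>{1..R}. c i k)"

definition Mc :: "(nat \<Rightarrow> nat \<Rightarrow> nat) \<Rightarrow> (nat \<Rightarrow> int) multiset" where
  "Mc c = (\<Sum>i\<in>{1..n}. \<Sum>k\<in>{1..R}. replicate_mset (c i k) (rt i k))"

definition V :: "(nat \<Rightarrow> nat \<Rightarrow> nat) set" where
  "V = {c. supp c \<and> (\<forall>i\<in>{1..n}. int (outt c i) = Gs c (i - 1) 1)
          \<and> (\<forall>k\<ge>1. Gs c n k = jvec bs k)}"

lemma suppT: "supp c \<Longrightarrow> (i, k) \<notin> T \<Longrightarrow> c i k = 0"
  by (auto simp: supp_def)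

lemma inT: "(i, k) \<in> T \<Longrightarrow> 1 \<le> i \<and> i \<le> n \<and> 1 \<le> k \<and> i + k \<le> R"
  using Tsub by auto

lemma supp_zero: "supp c \<Longrightarrow> (i = 0 \<or> n < i \<or> k = 0 \<or> R < i + k) \<Longrightarrow> c i k = 0"
  using inT[of i k] suppT[of c i k] by force

lemma G_step: "1 \<le> k \<Longrightarrow> Gs c (Suc t) k = Gs c t (Suc k) + int (c (Suc t) k)"
proof -
  assume k: "1 \<le> k"
  have "(\<Sum>i\<in>{1..Suc t}. c i (Suc t + k - i)) = (\<Sum>i\<in>{1..t}. c i (t + Suc k - i)) + c (Suc t) k"
    by (simp add: sum.cl_ivl_Suc)
  thus ?thesis using k by (simp add: Gs_def)
qed

lemma G_in: assumes "supp c" "t < j" "Suc t = j \<or> n \<le> t"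
  shows "Gs c t (j - t) = jvec as j + int (inn c j)"
proof -
  have "(\<Sum>i\<in>{1..t}. c i (t + (j - t) - i)) = (\<Sum>i\<in>{1..<j}. c i (j - i))"
  proof (rule sum.mono_neutral_cong_left)
    show "\<forall>i\<in>{1..<j} - {1..t}. c i (j - i) = 0"
      using assms supp_zero by auto
  qed (use assms in auto)
  thus ?thesis using assms by (simp add: Gs_def inn_def)
qed

lemma G_fin: assumes "supp c" shows "finite {k. Gs c t k \<noteq> 0}"
proof (rule finite_subset[of _ "{..R}"])
  show "{k. Gs c t k \<noteq> 0} \<subseteq> {..R}"
  proof
    fix k assume "k \<in> {k. Gs c t k \<noteq> 0}"
    hence ne: "Gs c t k \<noteq> 0" by simp
    show "k \<in> {..R}"
    proof (rule ccontr)
      assume "k \<notin> {..R}"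
      hence kR: "R < k" by (simp only: atMost_iff not_le)
      have j0: "jvec as (t + k) = 0" using kR by (simp add: jvec_def)
      have s0: "(\<Sum>i\<in>{1..t}. c i (t + k - i)) = 0"
        using kR supp_zero[OF assms] by (auto intro!: sum.neutral)
      have "Gs c t k = jvec as (t + k) + int (\<Sum>i\<in>{1..t}. c i (t + k - i))"
        using kR by (simp add: Gs_def)
      also have "\<dots> = 0" by (simp only: j0 s0 of_nat_0 add_0)
      finally show False using ne by simp
    qed
  qed
qed simp

lemma supp_sub: assumes "supp c" shows "{k. c i k \<noteq> 0} \<subseteq> {1..R}"
proof
  fix k assume "k \<in> {k. c i k \<noteq> 0}"
  hence "c i k \<noteq> 0" by simp
  hence nz: "\<not> (i = 0 \<or> n < i \<or> k = 0 \<or> R < i + k)" using supp_zero[OF assms(1), of i k] by (rule contrapos_nn)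
  have k0: "k \<noteq> 0" using nz by simp
  have kR: "\<not> R < i + k" using nz by simp
  have "k \<le> R" using le_trans[OF le_add2 kR[unfolded not_less]] .
  thus "k \<in> {1..R}" using k0 by simp
qed

lemma outt_sum: assumes "supp c" "1 \<le> i" "i \<le> n"
  shows "sum (c i) {k. c i k \<noteq> 0} = outt c i"
  unfolding outt_def
proof (rule sum.mono_neutral_left)
  show "{k. c i k \<noteq> 0} \<subseteq> {1..R}"
  proof
    fix k assume "k \<in> {k. c i k \<noteq> 0}"
    hence "c i k \<noteq> 0" by simp
    hence nz: "\<not> (i = 0 \<or> n < i \<or> k = 0 \<or> R < i + k)" using supp_zero[OF assms(1), of i k] by (rule contrapos_nn)
    have k0: "k \<noteq> 0" using nz by simp
    have kR: "\<not> R < i + k" using nz by simp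
    have "k \<le> R" using le_trans[OF le_add2 kR[unfolded not_less]] .
    thus "k \<in> {1..R}" using k0 by simp
  qed
qed auto

end

context jug begin

lemma Gl_nth: "t \<le> n \<Longrightarrow> Gl c ! t = Gs c t"
  by (simp add: Gl_def nth_map less_Suc_eq_le del: upt_Suc)

lemma Gs0: "Gs c 0 = jvec as"
  by (rule ext) (simp add: Gs_def)

lemma Gl_JS: assumes "c \<in> V" shows "Gl c \<in> JS T (jvec as) (jvec bs) n"
proof -
  have sc: "supp c" using assms by (simp add: V_def)
  have len: "length (Gl c) = n + 1" by (simp add: Gl_def)
  have st: "\<forall>s\<in>set (Gl c). jstate s"
    by (auto simp: Gl_def jstate_def Gs_def[of c _ 0] G_fin[OF sc] simp del: upt_Suc)
  have a0: "Gl c ! 0 = jvec as" using Gl_nth[of 0 c] Gs0 by simp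
  have bn: "Gl c ! n = jvec bs"
  proof (rule ext)
    fix k show "(Gl c ! n) k = jvec bs k"
      using assms Gl_nth[of n c] by (cases "k = 0") (auto simp: V_def Gs_def jvec_def)
  qed
  have stp: "jstep T i (Gl c ! (i - 1)) (Gl c ! i)" if i: "i \<in> {1..n}" for i
    unfolding jstep_def
  proof (intro exI[of _ "c i"] conjI allI impI)
    show "c i 0 = 0" using supp_zero[OF sc] by simp
    show "finite {k. c i k \<noteq> 0}"
      by (rule finite_subset[OF supp_sub[OF sc]]) simp
    show "int (sum (c i) {k. c i k \<noteq> 0}) = (Gl c ! (i - 1)) 1"
      using assms i outt_sum[OF sc, of i] Gl_nth[of "i - 1" c] by (auto simp: V_def)
    fix k
    show "0 < c i k \<Longrightarrow> (i, k) \<in> T" using sc by (auto simp: supp_def)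
    assume k: "1 \<le> k"
    obtain t where t: "i = Suc t" using i by (cases i) auto
    show "(Gl c ! i) k = (Gl c ! (i - 1)) (k + 1) + int (c i k)"
      using i k t G_step[OF k, of c t] Gl_nth[of i c] Gl_nth[of "i - 1" c] by auto
  qed
  show ?thesis using len st a0 bn stp by (simp add: JS_def)
qed

lemma JS_Gl: assumes ss: "ss \<in> JS T (jvec as) (jvec bs) n" shows "\<exists>c\<in>V. ss = Gl c"
proof -
  have len: "length ss = n + 1" and st: "\<forall>s\<in>set ss. jstate s" and a0: "ss ! 0 = jvec as"
    and bn: "ss ! n = jvec bs" and stp: "\<forall>i\<in>{1..n}. jstep T i (ss ! (i - 1)) (ss ! i)"
    using ss by (auto simp: JS_def)
  define c where "c i k = (if 1 \<le> i \<and> i \<le> n \<and> 1 \<le> k then nat ((ss ! i) k - (ss ! (i - 1)) (Suc k)) else 0)" for i k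
  have wit: "\<exists>d. d 0 = 0 \<and> finite {k. d k \<noteq> 0} \<and> int (sum d {k. d k \<noteq> 0}) = (ss ! (i - 1)) 1
        \<and> (\<forall>k\<ge>1. (ss ! i) k = (ss ! (i - 1)) (k + 1) + int (d k)) \<and> (\<forall>k. d k > 0 \<longrightarrow> (i, k) \<in> T)
        \<and> c i = d" if i: "i \<in> {1..n}" for i
  proof -
    obtain d where d: "d 0 = 0" "finite {k. d k \<noteq> 0}" "int (sum d {k. d k \<noteq> 0}) = (ss ! (i - 1)) 1"
       "\<forall>k\<ge>1. (ss ! i) k = (ss ! (i - 1)) (k + 1) + int (d k)" "\<forall>k. d k > 0 \<longrightarrow> (i, k) \<in> T"
      using stp i unfolding jstep_def by blast
    have "c i = d"
    proof
      fix k show "c i k = d k" using d i by (cases "k = 0") (auto simp: c_def)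
    qed
    thus ?thesis using d by blast
  qed
  have sc: "supp c" unfolding supp_def
  proof (intro allI impI)
    fix i k assume "c i k \<noteq> 0"
    hence i: "i \<in> {1..n}" by (auto simp: c_def split: if_splits)
    from wit[OF i] \<open>c i k \<noteq> 0\<close> show "(i, k) \<in> T" by auto
  qed
  have eq: "ss ! t = Gs c t" if "t \<le> n" for t
    using that
  proof (induction t)
    case 0 thus ?case using a0 Gs0 by simp
  next
    case (Suc t)
    have i: "Suc t \<in> {1..n}" using Suc.prems by simp
    obtain d where d: "\<forall>k\<ge>1. (ss ! Suc t) k = (ss ! t) (k + 1) + int (d k)" "c (Suc t) = d"
      using wit[OF i] by auto
    have js: "jstate (ss ! Suc t)" using st len Suc.prems by auto
    show ?case
    proof
      fix k show "(ss ! Suc t) k = Gs c (Suc t) k"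
      proof (cases "k = 0")
        case True thus ?thesis using js by (simp add: jstate_def Gs_def)
      next
        case False
        hence k: "1 \<le> k" by simp
        show ?thesis using d k G_step[OF k, of c t] Suc by auto
      qed
    qed
  qed
  have ssG: "ss = Gl c"
    by (rule nth_equalityI) (auto simp: len Gl_def eq less_Suc_eq_le simp del: upt_Suc)
  have "c \<in> V"
    unfolding V_def
  proof (intro CollectI conjI ballI allI impI)
    show "supp c" by fact
    fix i assume i: "i \<in> {1..n}"
    then obtain d where d: "int (sum d {k. d k \<noteq> 0}) = (ss ! (i - 1)) 1" "c i = d" using wit by blast
    have o: "outt c i = sum d {k. d k \<noteq> 0}" using outt_sum[OF sc, of i] i d(2) by simp
    have e: "ss ! (i - 1) = Gs c (i - 1)" by (rule eq) (use i[unfolded atLeastAtMost_iff] in linarith)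
    show "int (outt c i) = Gs c (i - 1) 1"
      unfolding o using d(1) e by simp
  next
    fix k :: nat assume "1 \<le> k"
    show "Gs c n k = jvec bs k" using eq[of n] bn by simp
  qed
  thus ?thesis using ssG by blast
qed

lemma inj_Gl: "inj_on Gl V"
proof
  fix c c' assume c: "c \<in> V" and c': "c' \<in> V" and e: "Gl c = Gl c'"
  have sc: "supp c" "supp c'" using c c' by (auto simp: V_def)
  have G: "Gs c t = Gs c' t" if "t \<le> n" for t using e Gl_nth[OF that] by metis
  show "c = c'"
  proof (intro ext)
    fix i k
    show "c i k = c' i k"
    proof (cases "(i, k) \<in> T")
      case False thus ?thesis using suppT[OF sc(1) False] suppT[OF sc(2) False] by simp
    next
      case True
      have ik: "1 \<le> i" "i \<le> n" "1 \<le> k" using inT[OF True] by simp_all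
      obtain t where t0: "i = Suc t" using ik(1) by (cases i) auto
      have t: "i = Suc t" "t < n" using t0 ik by auto
      have k: "1 \<le> k" by (rule ik(3))
      have "Gs c (Suc t) k = Gs c t (Suc k) + int (c (Suc t) k)" by (rule G_step[OF k])
      moreover have "Gs c' (Suc t) k = Gs c' t (Suc k) + int (c' (Suc t) k)" by (rule G_step[OF k])
      ultimately show ?thesis using G[of t] G[of "Suc t"] t by simp
    qed
  qed
qed

lemma bij_Gl: "bij_betw Gl V (JS T (jvec as) (jvec bs) n)"
  unfolding bij_betw_def
proof
  show "inj_on Gl V" by (rule inj_Gl)
  show "Gl ` V = JS T (jvec as) (jvec bs) n"
  proof
    show "Gl ` V \<subseteq> JS T (jvec as) (jvec bs) n" using Gl_JS by auto
    show "JS T (jvec as) (jvec bs) n \<subseteq> Gl ` V"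
    proof
      fix ss assume "ss \<in> JS T (jvec as) (jvec bs) n"
      then obtain c where "c \<in> V" "ss = Gl c" using JS_Gl by blast
      thus "ss \<in> Gl ` V" by simp
    qed
  qed
qed

end

context jug begin

lemma count_Mc: assumes sc: "supp c" and k0: "1 \<le> k0"
  shows "count (Mc c) (rt i0 k0) = c i0 k0"
proof -
  have inner: "(\<Sum>k\<in>{1..R}. count (replicate_mset (c i k) (rt i k)) (rt i0 k0))
        = (if i = i0 \<and> k0 \<le> R then c i0 k0 else 0)" for i
  proof -
    have "(\<Sum>k\<in>{1..R}. count (replicate_mset (c i k) (rt i k)) (rt i0 k0))
        = (\<Sum>k\<in>{1..R}. if k = k0 then (if i = i0 then c i0 k0 else 0) else 0)"
    proof (rule sum.cong)
      fix k assume "k \<in> {1..R}"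
      hence "1 \<le> k" by simp
      thus "count (replicate_mset (c i k) (rt i k)) (rt i0 k0) = (if k = k0 then (if i = i0 then c i0 k0 else 0) else 0)"
        using rt_inj[OF k0, of k i0 i] by (auto simp: count_replicate_mset)
    qed simp
    also have "\<dots> = (if i = i0 \<and> k0 \<le> R then c i0 k0 else 0)"
      using k0 by (simp add: sum.delta)
    finally show ?thesis .
  qed
  have "count (Mc c) (rt i0 k0) = (\<Sum>i\<in>{1..n}. if i = i0 then (if k0 \<le> R then c i0 k0 else 0) else 0)"
    unfolding Mc_def count_sum inner by (rule sum.cong) auto
  also have "\<dots> = (if i0 \<in> {1..n} \<and> k0 \<le> R then c i0 k0 else 0)"
    by (simp add: sum.delta)
  also have "\<dots> = c i0 k0"
  proof -
    have "\<not> (i0 \<in> {1..n} \<and> k0 \<le> R) \<Longrightarrow> c i0 k0 = 0"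
      by (rule supp_zero[OF sc]) auto
    thus ?thesis by auto
  qed
  finally show ?thesis .
qed

lemma Mc_zero: assumes sc: "supp c" and nz: "\<forall>i k. v \<noteq> rt i k"
  shows "count (Mc c) v = 0"
  using nz unfolding Mc_def count_sum by (auto intro!: sum.neutral simp: count_replicate_mset)

lemma set_Mc: assumes sc: "supp c" shows "set_mset (Mc c) \<subseteq> throwRoots T"
proof
  fix v assume v: "v \<in># Mc c"
  have "\<exists>i k. v = rt i k \<and> (i, k) \<in> T"
  proof (rule ccontr)
    assume nv: "\<not> (\<exists>i k. v = rt i k \<and> (i, k) \<in> T)"
    have "count (Mc c) v = 0"
      unfolding Mc_def count_sum
    proof (intro sum.neutral ballI)
      fix i k
      show "count (replicate_mset (c i k) (rt i k)) v = 0"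
        using nv suppT[OF sc, of i k] by (auto simp: count_replicate_mset)
    qed
    thus False using v by (simp add: count_eq_zero_iff)
  qed
  thus "v \<in> throwRoots T" by (auto simp: throwRoots_def rt_def)
qed

lemma outt_zero: assumes sc: "supp c" and x: "\<not> (1 \<le> x \<and> x \<le> n)" shows "outt c x = 0"
  unfolding outt_def by (rule sum.neutral) (use supp_zero[OF sc] x in auto)

lemma inner_in: assumes sc: "supp c"
  shows "(\<Sum>i\<in>{1..n}. \<Sum>k\<in>{1..R}. if x = i + k then c i k else 0) = inn c x"
proof -
  have step: "(\<Sum>k\<in>{1..R}. if x = i + k then c i k else 0) = (if i < x then c i (x - i) else 0)" for i
  proof (cases "i < x")
    case True
    have "(\<Sum>k\<in>{1..R}. if x = i + k then c i k else 0) = (\<Sum>k\<in>{1..R}. if k = x - i then c i k else 0)"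
      by (rule sum.cong) (use True in auto)
    also have "\<dots> = (if x - i \<in> {1..R} then c i (x - i) else 0)" by (simp add: sum.delta)
    also have "\<dots> = c i (x - i)"
    proof -
      have "\<not> x - i \<le> R \<Longrightarrow> c i (x - i) = 0" by (rule supp_zero[OF sc]) (use True in auto)
      thus ?thesis using True by auto
    qed
    finally show ?thesis using True by simp
  next
    case False
    thus ?thesis by (auto intro!: sum.neutral)
  qed
  have "(\<Sum>i\<in>{1..n}. \<Sum>k\<in>{1..R}. if x = i + k then c i k else 0)
      = (\<Sum>i\<in>{1..n}. if i \<in> {..<x} then c i (x - i) else 0)"
  proof (rule sum.cong[OF refl])
    fix i assume "i \<in> {1..n}"
    show "(\<Sum>k\<in>{1..R}. if x = i + k then c i k else 0) = (if i \<in> {..<x} then c i (x - i) else 0)"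
      unfolding step by simp
  qed
  also have "\<dots> = (\<Sum>i\<in>{1..n} \<inter> {..<x}. c i (x - i))"
    by (simp add: sum.inter_restrict)
  also have "\<dots> = (\<Sum>i\<in>{1..<x}. c i (x - i))"
  proof (rule sum.mono_neutral_left)
    show "\<forall>i\<in>{1..<x} - {1..n} \<inter> {..<x}. c i (x - i) = 0"
    proof
      fix i assume "i \<in> {1..<x} - {1..n} \<inter> {..<x}"
      hence "n < i" by auto
      thus "c i (x - i) = 0" by (intro supp_zero[OF sc]) simp
    qed
  qed auto
  finally show ?thesis by (simp add: inn_def)
qed

lemma sum_Mc: assumes sc: "supp c"
  shows "sum_mset (Mc c) x = int (outt c x) - int (inn c x)"
proof -
  have "sum_mset (Mc c) x = (\<Sum>i\<in>{1..n}. \<Sum>k\<in>{1..R}. int (c i k) * rt i k x)"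
    unfolding Mc_def by (simp add: sum_mset_sum fun_sum_eval rep_eval)
  also have "\<dots> = (\<Sum>i\<in>{1..n}. \<Sum>k\<in>{1..R}. (if x = i then int (c i k) else 0) - (if x = i + k then int (c i k) else 0))"
    by (intro sum.cong refl) (simp add: rt_val algebra_simps)
  also have "\<dots> = (\<Sum>i\<in>{1..n}. \<Sum>k\<in>{1..R}. if x = i then int (c i k) else 0)
      - (\<Sum>i\<in>{1..n}. \<Sum>k\<in>{1..R}. if x = i + k then int (c i k) else 0)"
    by (simp only: sum_subtractf)
  also have "\<dots> = int (outt c x) - int (inn c x)"
  proof -
    have "(\<Sum>i\<in>{1..n}. \<Sum>k\<in>{1..R}. if x = i then int (c i k) else 0)
       = (\<Sum>i\<in>{1..n}. if x = i then int (outt c i) else 0)"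
    proof (rule sum.cong[OF refl])
      fix i show "(\<Sum>k\<in>{1..R}. if x = i then int (c i k) else 0) = (if x = i then int (outt c i) else 0)"
        by (cases "x = i") (simp_all add: outt_def of_nat_sum)
    qed
    also have "\<dots> = int (outt c x)"
      using outt_zero[OF sc, of x] by (auto simp: sum.delta)
    finally have hA: "(\<Sum>i\<in>{1..n}. \<Sum>k\<in>{1..R}. if x = i then int (c i k) else 0) = int (outt c x)" .
    have hB: "(\<Sum>i\<in>{1..n}. \<Sum>k\<in>{1..R}. if x = i + k then int (c i k) else 0) = int (inn c x)"
      unfolding inner_in[OF sc, of x, symmetric] of_nat_sum by (intro sum.cong refl) simp
    show ?thesis using hA hB by simp
  qed
  finally show ?thesis .
qed

lemma GA: assumes "supp c" "1 \<le> i" shows "Gs c (i - 1) 1 = jvec as i + int (inn c i)"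
  using G_in[OF assms(1), of "i - 1" i] assms(2) by simp

lemma GB: assumes "supp c" "1 \<le> k" shows "Gs c n k = jvec as (n + k) + int (inn c (n + k))"
  using G_in[OF assms(1), of n "n + k"] assms(2) by simp

lemma inn0[simp]: "inn c 0 = 0" by (simp add: inn_def)

lemma valid_iff: assumes sc: "supp c"
  shows "sum_mset (Mc c) = jdelta as bs n \<longleftrightarrow>
    ((\<forall>i\<in>{1..n}. int (outt c i) = Gs c (i - 1) 1) \<and> (\<forall>k\<ge>1. Gs c n k = jvec bs k))"
proof
  assume h0: "sum_mset (Mc c) = jdelta as bs n"
  have h: "int (outt c x) - int (inn c x) = jdelta as bs n x" for x
    using h0 sum_Mc[OF sc, of x] by simp
  show "(\<forall>i\<in>{1..n}. int (outt c i) = Gs c (i - 1) 1) \<and> (\<forall>k\<ge>1. Gs c n k = jvec bs k)"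
  proof (intro conjI ballI allI impI)
    fix i assume i: "i \<in> {1..n}"
    show "int (outt c i) = Gs c (i - 1) 1"
      using h[of i] GA[OF sc, of i] i by (simp add: jdelta_def)
  next
    fix k :: nat assume k: "1 \<le> k"
    show "Gs c n k = jvec bs k"
      using h[of "n + k"] GB[OF sc k] outt_zero[OF sc, of "n + k"] k by (simp add: jdelta_def)
  qed
next
  assume h: "(\<forall>i\<in>{1..n}. int (outt c i) = Gs c (i - 1) 1) \<and> (\<forall>k\<ge>1. Gs c n k = jvec bs k)"
  show "sum_mset (Mc c) = jdelta as bs n"
  proof
    fix x
    show "sum_mset (Mc c) x = jdelta as bs n x"
    proof (cases "x = 0")
      case True thus ?thesis using sum_Mc[OF sc, of x] outt_zero[OF sc, of x] by (simp add: jdelta_def)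
    next
      case False
      show ?thesis
      proof (cases "x \<le> n")
        case True
        thus ?thesis using False h GA[OF sc, of x] sum_Mc[OF sc, of x] by (simp add: jdelta_def)
      next
        case xn: False
        define k where "k = x - n"
        have k: "1 \<le> k" "x = n + k" using xn by (auto simp: k_def)
        show ?thesis using h GB[OF sc k(1)] sum_Mc[OF sc, of x] outt_zero[OF sc, of x] k xn
          by (simp add: jdelta_def)
      qed
    qed
  qed
qed

lemma bij_Mc: "bij_betw Mc V (Ppart (throwRoots T) (jdelta as bs n))"
  unfolding bij_betw_def
proof
  show "inj_on Mc V"
  proof
    fix c c' assume c: "c \<in> V" and c': "c' \<in> V" and e: "Mc c = Mc c'"
    have sc: "supp c" "supp c'" using c c' by (auto simp: V_def)
    show "c = c'"
    proof (intro ext)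
      fix i k show "c i k = c' i k"
      proof (cases "(i, k) \<in> T")
        case False thus ?thesis using suppT[OF sc(1) False] suppT[OF sc(2) False] by simp
      next
        case True
        hence k: "1 \<le> k" using inT by simp
        show ?thesis using count_Mc[OF sc(1) k, of i] count_Mc[OF sc(2) k, of i] e by simp
      qed
    qed
  qed
  show "Mc ` V = Ppart (throwRoots T) (jdelta as bs n)"
  proof
    show "Mc ` V \<subseteq> Ppart (throwRoots T) (jdelta as bs n)"
    proof
      fix p assume "p \<in> Mc ` V"
      then obtain c where c: "c \<in> V" "p = Mc c" by blast
      have sc: "supp c" using c by (simp add: V_def)
      show "p \<in> Ppart (throwRoots T) (jdelta as bs n)"
        using c set_Mc[OF sc] valid_iff[OF sc] by (simp add: Ppart_def V_def)
    qed
    show "Ppart (throwRoots T) (jdelta as bs n) \<subseteq> Mc ` V"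
    proof
      fix p assume p: "p \<in> Ppart (throwRoots T) (jdelta as bs n)"
      have ps: "set_mset p \<subseteq> throwRoots T" and pd: "sum_mset p = jdelta as bs n"
        using p by (auto simp: Ppart_def)
      define c where "c i k = (if (i, k) \<in> T then count p (rt i k) else 0)" for i k
      have sc: "supp c" by (auto simp: supp_def c_def)
      have Mp: "Mc c = p"
      proof (rule multiset_eqI)
        fix v show "count (Mc c) v = count p v"
        proof (cases "\<exists>i k. (i, k) \<in> T \<and> v = rt i k")
          case True
          then obtain i k where ik: "(i, k) \<in> T" "v = rt i k" by blast
          have k: "1 \<le> k" using inT[OF ik(1)] by simp
          show ?thesis using count_Mc[OF sc k, of i] ik by (simp add: c_def)
        next
          case False
          have "v \<notin># p"
          proof
            assume "v \<in># p"
            hence "v \<in> throwRoots T" using ps by auto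
            thus False using False by (auto simp: throwRoots_def rt_def)
          qed
          hence p0: "count p v = 0" by (simp add: count_eq_zero_iff)
          have "count (Mc c) v = 0"
            unfolding Mc_def count_sum
          proof (intro sum.neutral ballI)
            fix i k
            show "count (replicate_mset (c i k) (rt i k)) v = 0"
              using False by (auto simp: count_replicate_mset c_def)
          qed
          thus ?thesis using p0 by simp
        qed
      qed
      have "c \<in> V" using sc valid_iff[OF sc] Mp pd by (simp add: V_def)
      thus "p \<in> Mc ` V" using Mp by blast
    qed
  qed
qed

lemma size_filter_Mc: assumes sc: "supp c"
  shows "size (filter_mset (\<lambda>v. \<exists>i. v = eps i - eps j) (Mc c)) = inn c j"
proof -
  have "size (filter_mset (\<lambda>v. \<exists>i. v = eps i - eps j) (Mc c))
      = (\<Sum>i\<in>{1..n}. \<Sum>k\<in>{1..R}. if j = i + k then c i k else 0)"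
    unfolding Mc_def
    by (simp add: size_filter_sum size_filter_rep) (intro sum.cong refl, simp add: rt_land)
  thus ?thesis using inner_in[OF sc] by simp
qed

lemma set_Gl: "s \<in> set (Gl c) \<longleftrightarrow> (\<exists>t\<le>n. s = Gs c t)"
  by (auto simp: Gl_def less_Suc_eq_le simp del: upt_Suc)

lemma cap_iff: assumes c: "c \<in> V"
  shows "Gl c \<in> JSm T (jvec as) (jvec bs) n m \<longleftrightarrow> Mc c \<in> Qpart (throwRoots T) (jdelta as bs n) as m"
proof -
  have sc: "supp c" using c by (simp add: V_def)
  have P: "Mc c \<in> Ppart (throwRoots T) (jdelta as bs n)" using bij_Mc c by (auto simp: bij_betw_def)
  have J: "Gl c \<in> JS T (jvec as) (jvec bs) n" using Gl_JS[OF c] .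
  have "(\<forall>t\<le>n. \<forall>k. Gs c t k \<le> int m) \<longleftrightarrow> (\<forall>j\<ge>1. jvec as j + int (inn c j) \<le> int m)"
  proof
    assume h: "\<forall>t\<le>n. \<forall>k. Gs c t k \<le> int m"
    show "\<forall>j\<ge>1. jvec as j + int (inn c j) \<le> int m"
    proof (intro allI impI)
      fix j :: nat assume j: "1 \<le> j"
      show "jvec as j + int (inn c j) \<le> int m"
      proof (cases "j \<le> n + 1")
        case True thus ?thesis using h GA[OF sc j] j by (metis diff_le_mono le_diff_conv add_diff_cancel_right')
      next
        case False
        hence k: "1 \<le> j - n" "n + (j - n) = j" by auto
        show ?thesis using h GB[OF sc k(1)] k(2) by (metis order_refl)
      qed
    qed
  next
    assume h: "\<forall>j\<ge>1. jvec as j + int (inn c j) \<le> int m"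
    show "\<forall>t\<le>n. \<forall>k. Gs c t k \<le> int m"
    proof (intro allI impI)
      fix t k assume t: "t \<le> n"
      show "Gs c t k \<le> int m"
      proof (cases "k = 0")
        case True thus ?thesis by (simp add: Gs_def)
      next
        case False
        have "(\<Sum>i\<in>{1..t}. c i (t + k - i)) \<le> (\<Sum>i\<in>{1..<t + k}. c i (t + k - i))"
          by (rule sum_mono2) (use False in auto)
        hence le: "int (\<Sum>i\<in>{1..t}. c i (t + k - i)) \<le> int (inn c (t + k))"
          unfolding inn_def by (simp only: of_nat_le_iff)
        have "Gs c t k = jvec as (t + k) + int (\<Sum>i\<in>{1..t}. c i (t + k - i))"
          by (simp only: Gs_def if_not_P[OF False])
        hence "Gs c t k \<le> jvec as (t + k) + int (inn c (t + k))"
          using le by linarith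
        also have "\<dots> \<le> int m" using h False by simp
        finally show ?thesis .
      qed
    qed
  qed
  moreover have "(\<forall>s\<in>set (Gl c). \<forall>k. s k \<le> int m) \<longleftrightarrow> (\<forall>t\<le>n. \<forall>k. Gs c t k \<le> int m)"
  proof
    assume h: "\<forall>s\<in>set (Gl c). \<forall>k. s k \<le> int m"
    show "\<forall>t\<le>n. \<forall>k. Gs c t k \<le> int m"
    proof (intro allI impI)
      fix t k assume "t \<le> n"
      hence "Gs c t \<in> set (Gl c)" unfolding set_Gl by blast
      thus "Gs c t k \<le> int m" using h by blast
    qed
  next
    assume h: "\<forall>t\<le>n. \<forall>k. Gs c t k \<le> int m"
    show "\<forall>s\<in>set (Gl c). \<forall>k. s k \<le> int m"
    proof (intro ballI allI)
      fix s k assume "s \<in> set (Gl c)"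
      then obtain t where "t \<le> n" "s = Gs c t" unfolding set_Gl by blast
      thus "s k \<le> int m" using h by blast
    qed
  qed
  ultimately show ?thesis using P J size_filter_Mc[OF sc]
    by (simp add: JSm_def Qpart_def)
qed

end

theorem mainTheorem8:
  fixes as bs :: "int list" and n m :: nat and T :: "(nat \<times> nat) set"
  assumes "sum_list as = sum_list bs"
    and "n \<ge> 1" and "m \<ge> 1"
    and "T \<subseteq> {(i, j). 1 \<le> i \<and> i \<le> n \<and> 1 \<le> j \<and> i + j \<le> max (length as) (n + length bs)}"
  shows "(\<exists>f. bij_betw f (JSm T (jvec as) (jvec bs) n m)
                         (Qpart (throwRoots T) (jdelta as bs n) as m))
       \<and> card (JSm T (jvec as) (jvec bs) n m) = card (Qpart (throwRoots T) (jdelta as bs n) as m)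
       \<and> card (JS T (jvec as) (jvec bs) n) = Kpf (throwRoots T) (jdelta as bs n)"
proof -
  interpret J: jug as bs n T using assms(4) by unfold_locales
  have b1: "bij_betw J.Gl J.V (JS T (jvec as) (jvec bs) n)" by (rule J.bij_Gl)
  have b2: "bij_betw J.Mc J.V (Ppart (throwRoots T) (jdelta as bs n))" by (rule J.bij_Mc)
  have bJS: "bij_betw (J.Mc \<circ> inv_into J.V J.Gl) (JS T (jvec as) (jvec bs) n) (Ppart (throwRoots T) (jdelta as bs n))"
    by (rule bij_betw_trans[OF bij_betw_inv_into[OF b1] b2])
  define V' where "V' = {c \<in> J.V. J.Gl c \<in> JSm T (jvec as) (jvec bs) n m}"
  have sub: "V' \<subseteq> J.V" by (auto simp: V'_def)
  have i1: "J.Gl ` V' = JSm T (jvec as) (jvec bs) n m"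
  proof
    show "J.Gl ` V' \<subseteq> JSm T (jvec as) (jvec bs) n m" by (auto simp: V'_def)
    show "JSm T (jvec as) (jvec bs) n m \<subseteq> J.Gl ` V'"
    proof
      fix ss assume ss: "ss \<in> JSm T (jvec as) (jvec bs) n m"
      hence "ss \<in> JS T (jvec as) (jvec bs) n" by (simp add: JSm_def)
      then obtain c where c: "c \<in> J.V" "ss = J.Gl c" using b1 by (auto simp: bij_betw_def)
      hence "c \<in> V'" using ss by (simp add: V'_def)
      thus "ss \<in> J.Gl ` V'" using c by blast
    qed
  qed
  have i2: "J.Mc ` V' = Qpart (throwRoots T) (jdelta as bs n) as m"
  proof
    show "J.Mc ` V' \<subseteq> Qpart (throwRoots T) (jdelta as bs n) as m"
      using J.cap_iff by (auto simp: V'_def)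
    show "Qpart (throwRoots T) (jdelta as bs n) as m \<subseteq> J.Mc ` V'"
    proof
      fix p assume p: "p \<in> Qpart (throwRoots T) (jdelta as bs n) as m"
      hence "p \<in> Ppart (throwRoots T) (jdelta as bs n)" by (simp add: Qpart_def)
      then obtain c where c: "c \<in> J.V" "p = J.Mc c" using b2 by (auto simp: bij_betw_def)
      hence "c \<in> V'" using p J.cap_iff[OF c(1)] by (simp add: V'_def)
      thus "p \<in> J.Mc ` V'" using c by blast
    qed
  qed
  have g1: "bij_betw J.Gl V' (JSm T (jvec as) (jvec bs) n m)"
    using bij_betw_subset[OF b1 sub] i1 by simp
  have g2: "bij_betw J.Mc V' (Qpart (throwRoots T) (jdelta as bs n) as m)"
    using bij_betw_subset[OF b2 sub] i2 by simp
  have bm: "bij_betw (J.Mc \<circ> inv_into V' J.Gl) (JSm T (jvec as) (jvec bs) n m) (Qpart (throwRoots T) (jdelta as bs n) as m)"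
    by (rule bij_betw_trans[OF bij_betw_inv_into[OF g1] g2])
  show ?thesis
    using bm bij_betw_same_card[OF bm] bij_betw_same_card[OF bJS] by (auto simp: Kpf_def)
qed

end
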